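(* In the Lie algebra $\mathcal W=\mathcal W(\ell_1,\ell_2,\ell_3,\Gamma)$, the centralizer $\{u\in\mathcal W\mid [u,x^{\alpha}]=0\ \text{for all }\alpha\in\Gamma\}$ of the elements $x^\alpha=x^{\alpha,0}$ equals $\mathcal A[\mathcal D_1]=\mathrm{span}\{x^{\alpha,\vec i}\partial^\mu\mid(\alpha,\vec i)\in\Gamma\times J_1,\ \mu\in\mathbb N^{\ell_1}\times\{0\}^{\ell_2+\ell_3}\}$.
   Context: $\mathbb F$ is a field of characteristic $0$; $\mathbb N=\{0,1,2,\dots\}$. Let $\ell_1,\ell_2,\ell_3\in\mathbb N$ with $\ell=\ell_1+\ell_2+\ell_3>0$, and let $\Gamma$ be an additive subgroup of $\mathbb F^{\ell_2+\ell_3}$ containing an $\mathbb F$-basis of $\mathbb F^{\ell_2+\ell_3}$. Elements $\alpha\in\Gamma$ are written $\alpha=(\alpha_1,\dots,\alpha_\ell)$ with $\alpha_1=\dots=\alpha_{\ell_1}=0$. Let $J=\mathbb N^\ell$, $J_1=\mathbb N^{\ell_1+\ell_2}\times\{0\}^{\ell_3}$; $1_{[p]}$ is the $p$-th unit vector. $\mathcal A=\mathbb F[\Gamma\times J_1]$ has basis $x^{\alpha,\vec i}$ with $x^{\alpha,\vec i}x^{\beta,\vec j}=x^{\alpha+\beta,\vec i+\vec j}$ (out-of-range symbols read as $0$); derivations $\partial_p(x^{\alpha,\vec i})=\alpha_px^{\alpha,\vec i}+i_px^{\alpha,\vec i-1_{[p]}}$, $1\le p\le\ell$; $\mathcal D=\mathrm{span}\{\partial_p\}$,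 $\mathcal D_1=\mathrm{span}\{\partial_1,\dots,\partial_{\ell_1}\}$. $\mathcal W=\mathcal A\otimes\mathbb F[\mathcal D]$ has basis $x^{\alpha,\vec i}\partial^\mu$ ($\mu\in J$) and associative product $u\partial^\mu\cdot v\partial^\nu=\sum_{\lambda\in J}\binom{\mu}{\lambda}u\,\partial^\lambda(v)\,\partial^{\mu+\nu-\lambda}$ ($u,v\in\mathcal A$), with Lie bracket the commutator. *)

theory Defs
  imports Main
begin

(* Conventions (0-indexed coordinates): coordinates p = 0..<l, where l = l1+l2+l3.
   A "degree" alpha is a function nat => 'a vanishing outside [l1, l)  (so alpha_p = 0 for p < l1).
   Multi-indices i, mu are functions nat => nat vanishing outside [0, l).
   An element of A = F[Gamma x J1] is a coefficient function on (alpha, i), finitely supported.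
   An element of W = A (x) F[D] is a coefficient function on (alpha, i, mu), finitely supported:
   u = sum u(alpha,i,mu) x^{alpha,i} d^mu. *)

type_synonym 'a Aelt = "((nat \<Rightarrow> 'a) \<times> (nat \<Rightarrow> nat)) \<Rightarrow> 'a"
type_synonym 'a Welt = "((nat \<Rightarrow> 'a) \<times> (nat \<Rightarrow> nat) \<times> (nat \<Rightarrow> nat)) \<Rightarrow> 'a"

definition Jset :: "nat \<Rightarrow> (nat \<Rightarrow> nat) set" where
  "Jset l = {mu. \<forall>p\<ge>l. mu p = 0}"

definition J1set :: "nat \<Rightarrow> nat \<Rightarrow> (nat \<Rightarrow> nat) set" where
  "J1set l1 l2 = {i. \<forall>p\<ge>l1 + l2. i p = 0}"

definition JD1set :: "nat \<Rightarrow> (nat \<Rightarrow> nat) set" where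
  "JD1set l1 = {mu. \<forall>p\<ge>l1. mu p = 0}"

(* the ambient space F^{l2+l3}, embedded as vectors vanishing outside [l1, l) *)
definition Vspace :: "nat \<Rightarrow> nat \<Rightarrow> (nat \<Rightarrow> 'a::zero) set" where
  "Vspace l1 l = {a. \<forall>p. (p < l1 \<or> l \<le> p) \<longrightarrow> a p = 0}"

definition is_additive_subgroup :: "(nat \<Rightarrow> 'a::ab_group_add) set \<Rightarrow> bool" where
  "is_additive_subgroup G \<longleftrightarrow> (\<lambda>_. 0) \<in> G \<and>
      (\<forall>a\<in>G. \<forall>b\<in>G. (\<lambda>p. a p + b p) \<in> G) \<and> (\<forall>a\<in>G. (\<lambda>p. - a p) \<in> G)"

definition is_basis_of :: "(nat \<Rightarrow> 'a::field) set \<Rightarrow> (nat \<Rightarrow> 'a) set \<Rightarrow> bool" where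
  "is_basis_of B V \<longleftrightarrow> finite B \<and> B \<subseteq> V \<and>
     (\<forall>c. (\<forall>p. (\<Sum>b\<in>B. c b * b p) = 0) \<longrightarrow> (\<forall>b\<in>B. c b = 0)) \<and>
     (\<forall>v\<in>V. \<exists>c. v = (\<lambda>p. \<Sum>b\<in>B. c b * b p))"

definition supp :: "('k \<Rightarrow> 'a::zero) \<Rightarrow> 'k set" where
  "supp f = {k. f k \<noteq> 0}"

definition Aset :: "nat \<Rightarrow> nat \<Rightarrow> (nat \<Rightarrow> 'a::zero) set \<Rightarrow> 'a Aelt set" where
  "Aset l1 l2 G = {f. finite (supp f) \<and>
      (\<forall>a i. f (a, i) \<noteq> 0 \<longrightarrow> a \<in> G \<and> i \<in> J1set l1 l2)}"

definition Wset :: "nat \<Rightarrow> nat \<Rightarrow> nat \<Rightarrow> (nat \<Rightarrow> 'a::zero) set \<Rightarrow> 'a Welt set" where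
  "Wset l1 l2 l3 G = {u. finite (supp u) \<and>
      (\<forall>a i mu. u (a, i, mu) \<noteq> 0 \<longrightarrow> a \<in> G \<and> i \<in> J1set l1 l2 \<and> mu \<in> Jset (l1 + l2 + l3))}"

definition AD1set :: "nat \<Rightarrow> nat \<Rightarrow> nat \<Rightarrow> (nat \<Rightarrow> 'a::zero) set \<Rightarrow> 'a Welt set" where
  "AD1set l1 l2 l3 G = {u \<in> Wset l1 l2 l3 G. \<forall>a i mu. u (a, i, mu) \<noteq> 0 \<longrightarrow> mu \<in> JD1set l1}"

definition monoA :: "(nat \<Rightarrow> 'a::{zero,one}) \<Rightarrow> (nat \<Rightarrow> nat) \<Rightarrow> 'a Aelt" where
  "monoA a i = (\<lambda>k. if k = (a, i) then 1 else 0)"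

definition monoW :: "(nat \<Rightarrow> 'a::{zero,one}) \<Rightarrow> (nat \<Rightarrow> nat) \<Rightarrow> (nat \<Rightarrow> nat) \<Rightarrow> 'a Welt" where
  "monoW a i mu = (\<lambda>k. if k = (a, i, mu) then 1 else 0)"

(* the derivation d_p on A:  d_p(x^{b,j}) = b_p x^{b,j} + j_p x^{b, j - 1_p} *)
definition derA :: "nat \<Rightarrow> 'a::comm_ring_1 Aelt \<Rightarrow> 'a Aelt" where
  "derA p f = (\<lambda>(b, j). b p * f (b, j) + of_nat (j p + 1) * f (b, j(p := j p + 1)))"

(* d^lambda = d_0^{lambda_0} o ... o d_{n-1}^{lambda_{n-1}}  (derivations commute) *)
fun derpowA :: "(nat \<Rightarrow> nat) \<Rightarrow> nat \<Rightarrow> 'a::comm_ring_1 Aelt \<Rightarrow> 'a Aelt" where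
  "derpowA lam 0 f = f"
| "derpowA lam (Suc n) f = (derA n ^^ lam n) (derpowA lam n f)"

(* product in A:  x^{a,i} x^{b,j} = x^{a+b, i+j}, extended bilinearly *)
definition mulA :: "'a::comm_ring_1 Aelt \<Rightarrow> 'a Aelt \<Rightarrow> 'a Aelt" where
  "mulA f g = (\<lambda>(c, k). \<Sum>x\<in>supp f. \<Sum>y\<in>supp g.
      if (\<lambda>p. fst x p + fst y p) = c \<and> (\<lambda>p. snd x p + snd y p) = k then f x * g y else 0)"

definition binomv :: "nat \<Rightarrow> (nat \<Rightarrow> nat) \<Rightarrow> (nat \<Rightarrow> nat) \<Rightarrow> nat" where
  "binomv l mu lam = (\<Prod>p<l. mu p choose lam p)"

(* associative product on W:
   u d^mu . v d^nu = sum_{lam <= mu} binom(mu,lam) u d^lam(v) d^{mu+nu-lam}, extended bilinearly *)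
definition mulW :: "nat \<Rightarrow> 'a::comm_ring_1 Welt \<Rightarrow> 'a Welt \<Rightarrow> 'a Welt" where
  "mulW l u v = (\<lambda>(c, k, rho).
     \<Sum>x\<in>supp u. \<Sum>y\<in>supp v. \<Sum>lam\<in>{lam. \<forall>p. lam p \<le> snd (snd x) p}.
       (case x of (a, i, mu) \<Rightarrow> case y of (b, j, nu) \<Rightarrow>
         if rho = (\<lambda>p. mu p + nu p - lam p)
         then u x * v y * of_nat (binomv l mu lam) *
              mulA (monoA a i) (derpowA lam l (monoA b j)) (c, k)
         else 0))"

definition bracketW :: "nat \<Rightarrow> 'a::comm_ring_1 Welt \<Rightarrow> 'a Welt \<Rightarrow> 'a Welt" where
  "bracketW l u v = (\<lambda>k. mulW l u v k - mulW l v u k)"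

end

theory Submission
  imports Defs
begin

lemma finite_L:
  assumes "mu \<in> Jset l"
  shows "finite {lam::nat\<Rightarrow>nat. \<forall>p. lam p \<le> mu p}"
proof -
  let ?M = "\<Sum>p<l. mu p"
  have "{lam::nat\<Rightarrow>nat. \<forall>p. lam p \<le> mu p} \<subseteq>
        {f. \<forall>x. (x \<in> {..<l} \<longrightarrow> f x \<in> {..?M}) \<and> (x \<notin> {..<l} \<longrightarrow> f x = 0)}"
  proof
    fix lam :: "nat \<Rightarrow> nat" assume "lam \<in> {lam::nat\<Rightarrow>nat. \<forall>p. lam p \<le> mu p}"
    then have h: "\<forall>p. lam p \<le> mu p" by simp
    have a: "lam x \<in> {..?M}" if "x \<in> {..<l}" for x
    proof -
      from that have "mu x \<le> ?M" by (intro member_le_sum) auto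
      then show "lam x \<in> {..?M}" using h[rule_format, of x] by simp
    qed
    have b: "lam x = 0" if "x \<notin> {..<l}" for x
    proof -
      have "mu x = 0" using that assms unfolding Jset_def by simp
      then show ?thesis using h[rule_format, of x] by simp
    qed
    show "lam \<in> {f. \<forall>x. (x \<in> {..<l} \<longrightarrow> f x \<in> {..?M}) \<and> (x \<notin> {..<l} \<longrightarrow> f x = 0)}"
      using a b by blast
  qed
  moreover have "finite {f::nat\<Rightarrow>nat. \<forall>x. (x \<in> {..<l} \<longrightarrow> f x \<in> {..?M}) \<and> (x \<notin> {..<l} \<longrightarrow> f x = 0)}"
    by (rule finite_set_of_finite_funs) simp_all
  ultimately show ?thesis by (rule finite_subset)
qed
lemma derA_mono:
  "derA p (\<lambda>k. if k = (b, \<lambda>_. 0) then t else 0) = (\<lambda>k. if k = (b, \<lambda>_. 0) then b p * t else 0)"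
proof (rule ext, clarify)
  fix b' :: "nat \<Rightarrow> 'a" and j :: "nat \<Rightarrow> nat"
  have "j(p := j p + 1) \<noteq> (\<lambda>_. 0)" by (metis fun_upd_same add_is_0 one_neq_zero)
  then show "derA p (\<lambda>k. if k = (b, \<lambda>_. 0) then t else 0) (b', j) =
       (if (b', j) = (b, \<lambda>_. 0) then b p * t else 0)"
    unfolding derA_def by auto
qed

lemma derA_pow_mono:
  fixes b :: "nat \<Rightarrow> 'a::comm_ring_1"
  shows "(derA p ^^ n) (\<lambda>k. if k = (b, \<lambda>_. 0) then t else 0) = (\<lambda>k. if k = (b, \<lambda>_. 0) then b p ^ n * t else 0)"
proof (induction n)
  case 0 show ?case by (simp cong: if_cong)
next
  case (Suc n) show ?case by (simp add: Suc derA_mono mult.assoc cong: if_cong)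
qed

lemma derpowA_mono:
  fixes b :: "nat \<Rightarrow> 'a::comm_ring_1"
  shows "derpowA lam n (\<lambda>k. if k = (b, \<lambda>_. 0) then t else 0) = (\<lambda>k. if k = (b, \<lambda>_. 0) then (\<Prod>p<n. b p ^ lam p) * t else 0)"
proof (induction n)
  case 0 show ?case by (simp cong: if_cong)
next
  case (Suc n) show ?case by (simp add: Suc derA_pow_mono mult_ac cong: if_cong)
qed

lemma derpowA_zero: "derpowA (\<lambda>_. 0) n f = f"
  by (induction n) simp_all

lemma supp_single: "supp (\<lambda>k. if k = x then (t::'a::zero) else 0) = (if t = 0 then {} else {x})"
  by (auto simp: supp_def)

lemma mulA_mono:
  "mulA (monoA a i) (\<lambda>k. if k = (b, j) then t else 0) (c, k) =
     (if c = (\<lambda>p. a p + b p) \<and> k = (\<lambda>p. i p + j p) then t else 0)"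
proof (cases "t = 0")
  case True then show ?thesis unfolding mulA_def supp_single by simp
next
  case False
  have S: "supp (monoA a i) = {(a,i)}" unfolding monoA_def supp_single by simp
  show ?thesis unfolding mulA_def supp_single S using False by (auto simp: monoA_def)
qed

lemma mulA_mono2:
  "mulA (monoA a i) (monoA b j) (c, k) =
     (if c = (\<lambda>p. a p + b p) \<and> k = (\<lambda>p. i p + j p) then 1 else 0)"
  using mulA_mono[of a i b j 1 c k] by (simp add: monoA_def[of b j])



lemma supp_monoW: "supp (monoW a i mu :: 'a::zero_neq_one Welt) = {(a,i,mu)}"
  unfolding monoW_def supp_def by auto

lemma mulW_right:
  fixes u :: "'a::comm_ring_1 Welt"
  shows "mulW l u (monoW a (\<lambda>_. 0) (\<lambda>_. 0)) (c,k,rho) =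
   (\<Sum>x\<in>supp u. \<Sum>lam\<in>{lam. \<forall>p. lam p \<le> snd (snd x) p}.
      (case x of (a',i,mu) \<Rightarrow> if rho = (\<lambda>p. mu p - lam p) \<and> c = (\<lambda>p. a' p + a p) \<and> k = i
        then u x * of_nat (binomv l mu lam) * (\<Prod>p<l. a p ^ lam p) else 0))"
  unfolding mulW_def supp_monoW
proof (simp, intro sum.cong refl, clarify)
  fix a' i mu lam
  have m: "monoA a (\<lambda>_. 0) = (\<lambda>k. if k = (a, \<lambda>_. 0) then (1::'a) else 0)" unfolding monoA_def by simp
  show "(if rho = (\<lambda>p. mu p - lam p)
        then u (a', i, mu) * monoW a (\<lambda>_. 0) (\<lambda>_. 0) (a, \<lambda>_. 0, \<lambda>_. 0) * of_nat (binomv l mu lam) *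
             mulA (monoA a' i) (derpowA lam l (monoA a (\<lambda>_. 0))) (c, k)
        else 0) =
       (if rho = (\<lambda>p. mu p - lam p) \<and> c = (\<lambda>p. a' p + a p) \<and> k = i
        then u (a', i, mu) * of_nat (binomv l mu lam) * (\<Prod>p<l. a p ^ lam p) else 0)"
    unfolding m derpowA_mono mulA_mono by (simp add: monoW_def)
qed

lemma mulW_left:
  fixes u :: "'a::comm_ring_1 Welt"
  shows "mulW l (monoW a (\<lambda>_. 0) (\<lambda>_. 0)) u (c,k,rho) =
   (\<Sum>y\<in>supp u. (case y of (b,j,nu) \<Rightarrow> if rho = nu \<and> c = (\<lambda>p. a p + b p) \<and> k = j
        then u y else 0))"
proof -
  have L: "{lam::nat\<Rightarrow>nat. \<forall>p. lam p \<le> 0} = {\<lambda>_. 0}" by auto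
  have L2: "{lam::nat\<Rightarrow>nat. \<forall>p. lam p = 0} = {\<lambda>_. 0}" by auto
  have L3: "{lam::nat\<Rightarrow>nat. \<forall>p. lam p \<le> snd (snd (a, (\<lambda>_. 0::nat), (\<lambda>_. 0::nat))) p} = {\<lambda>_. 0}" by auto
  have B: "binomv l (\<lambda>_. 0) (\<lambda>_. 0) = 1" unfolding binomv_def by simp
  show ?thesis
  unfolding mulW_def supp_monoW
  apply simp
  apply (subst L2)
  apply simp
  apply (intro sum.cong refl)
  apply clarify
  apply (simp add: B derpowA_zero mulA_mono2 monoW_def)
  done
qed



definition uvec :: "nat \<Rightarrow> nat \<Rightarrow> nat" where
  "uvec r = (\<lambda>p. if p = r then 1 else 0)"

lemma uvec_eq_iff: "uvec r = uvec r' \<longleftrightarrow> r = r'"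
  unfolding uvec_def by (metis one_neq_zero)

lemma prod_uvec:
  fixes a :: "nat \<Rightarrow> 'a::comm_ring_1"
  assumes "r < l"
  shows "(\<Prod>p<l. a p ^ uvec r p) = a r"
proof -
  have "(\<Prod>p<l. a p ^ uvec r p) = (\<Prod>p<l. if p = r then a r else 1)"
    by (intro prod.cong) (auto simp: uvec_def)
  also have "\<dots> = a r" using assms by simp
  finally show ?thesis .
qed

lemma key_P:
  fixes a :: "nat \<Rightarrow> 'a::comm_ring_1" and lam :: "nat \<Rightarrow> nat"
  assumes a0: "\<forall>p<l1. a p = 0" and lam_l: "\<forall>p\<ge>l. lam p = 0"
    and cases: "lam = (\<lambda>_. 0) \<or> (\<exists>p<l1. lam p \<noteq> 0) \<or> (\<exists>r\<in>{l1..<l}. lam = uvec r)"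
  shows "(\<Prod>p<l. a p ^ lam p) - (\<Prod>p<l. (0::'a) ^ lam p) =
         (\<Sum>r\<in>{l1..<l}. (if lam = uvec r then 1 else 0) * a r)"
proof -
  consider "lam = (\<lambda>_. 0)" | "\<exists>p<l1. lam p \<noteq> 0" | "\<exists>r\<in>{l1..<l}. lam = uvec r"
    using cases by blast
  then show ?thesis
  proof cases
    case 1
    have "lam \<noteq> uvec r" for r using 1 unfolding uvec_def by (metis one_neq_zero)
    then show ?thesis using 1 by simp
  next
    case 2
    then obtain p where p: "p < l1" "lam p \<noteq> 0" by blast
    have pl: "p < l" using p lam_l by (meson not_le)
    have z1: "(\<Prod>p<l. a p ^ lam p) = 0"
      proof (rule prod_zero)
      show "\<exists>x\<in>{..<l}. a x ^ lam x = 0" using p pl a0 by (intro bexI[of _ p]) (auto simp: zero_power)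
    qed simp
    have z2: "(\<Prod>p<l. (0::'a) ^ lam p) = 0"
      proof (rule prod_zero)
      show "\<exists>x\<in>{..<l}. (0::'a) ^ lam x = 0" using p pl by (intro bexI[of _ p]) (auto simp: zero_power)
    qed simp
    have "lam \<noteq> uvec r" if "r \<in> {l1..<l}" for r
      using that p unfolding uvec_def by auto
    then show ?thesis using z1 z2 by simp
  next
    case 3
    then obtain r where r: "r \<in> {l1..<l}" "lam = uvec r" by blast
    have "(\<Sum>r'\<in>{l1..<l}. (if lam = uvec r' then 1 else 0) * a r') =
          (\<Sum>r'\<in>{l1..<l}. if r' = r then a r else 0)"
      by (intro sum.cong) (auto simp: r(2) uvec_eq_iff)
    also have "\<dots> = a r" using r(1) by simp
    finally show ?thesis using r prod_uvec[of r l a] prod_uvec[of r l "\<lambda>_. 0"] by simp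
  qed
qed

lemma two_le_sum:
  fixes lam :: "nat \<Rightarrow> nat"
  assumes "finite R" "lam \<noteq> (\<lambda>_. 0)" "\<forall>p. p \<notin> R \<longrightarrow> lam p = 0" "\<forall>r\<in>R. lam \<noteq> uvec r"
  shows "2 \<le> (\<Sum>p\<in>R. lam p)"
proof -
  obtain p where p: "lam p \<noteq> 0" using assms(2) by auto
  then have pR: "p \<in> R" using assms(3) by auto
  show ?thesis
  proof (cases "lam p \<ge> 2")
    case True
    then show ?thesis using member_le_sum[OF pR, of lam] assms(1) by simp
  next
    case False
    then have lp: "lam p = 1" using p by simp
    obtain p' where p': "lam p' \<noteq> uvec p p'" using assms(4) pR by auto
    have pp': "p' \<noteq> p" using p' lp unfolding uvec_def by auto
    then have lp': "lam p' \<noteq> 0" using p' unfolding uvec_def by auto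
    then have p'R: "p' \<in> R" using assms(3) by auto
    have "(\<Sum>p\<in>{p,p'}. lam p) \<le> (\<Sum>p\<in>R. lam p)"
      by (rule sum_mono2) (use assms(1) pR p'R in auto)
    moreover have "(\<Sum>p\<in>{p,p'}. lam p) = lam p + lam p'" using pp' by simp
    ultimately show ?thesis using lp lp' by simp
  qed
qed

lemma binomv_uvec:
  assumes "q < l"
  shows "binomv l mu (uvec q) = mu q"
proof -
  have "binomv l mu (uvec q) = (\<Prod>p<l. if p = q then mu q else 1)"
    unfolding binomv_def by (intro prod.cong) (auto simp: uvec_def)
  also have "\<dots> = mu q" using assms by simp
  finally show ?thesis .
qed

lemma binomv_zero: "binomv l mu (\<lambda>_. 0) = 1"
  unfolding binomv_def by simp

lemma add_cancel_fun:
  fixes a0 a a' :: "nat \<Rightarrow> 'a::ab_group_add"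
  shows "((\<lambda>p. a0 p + a p) = (\<lambda>p. a' p + a p)) \<longleftrightarrow> a' = a0"
    and "((\<lambda>p. a0 p + a p) = (\<lambda>p. a p + a' p)) \<longleftrightarrow> a' = a0"
  by (auto simp: fun_eq_iff add.commute)



lemma AD1_centralizes:
  fixes u :: "'a::field_char_0 Welt" and G :: "(nat \<Rightarrow> 'a) set"
  assumes GV: "G \<subseteq> Vspace l1 l" and uA: "u \<in> AD1set l1 l2 l3 G" and aG: "a \<in> G"
    and l: "l = l1 + l2 + l3"
  shows "bracketW l u (monoW a (\<lambda>_. 0) (\<lambda>_. 0)) = (\<lambda>_. 0)"
proof (rule ext)
  fix w :: "(nat \<Rightarrow> 'a) \<times> (nat \<Rightarrow> nat) \<times> (nat \<Rightarrow> nat)"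
  obtain c k rho where w: "w = (c,k,rho)" by (cases w) auto
  have av: "\<forall>p<l1. a p = 0" using aG GV unfolding Vspace_def by auto
  have uW: "u \<in> Wset l1 l2 l3 G" and JD: "\<And>a i mu. u (a,i,mu) \<noteq> 0 \<Longrightarrow> mu \<in> JD1set l1"
    using uA unfolding AD1set_def by auto
  have inner: "(\<Sum>lam\<in>{lam. \<forall>p. lam p \<le> mu p}.
      (if rho = (\<lambda>p. mu p - lam p) \<and> c = (\<lambda>p. a' p + a p) \<and> k = i
        then u (a',i,mu) * of_nat (binomv l mu lam) * (\<Prod>p<l. a p ^ lam p) else 0))
     = (if rho = mu \<and> c = (\<lambda>p. a' p + a p) \<and> k = i then u (a',i,mu) else 0)"
    if x: "(a',i,mu) \<in> supp u" for a' i mu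
  proof -
    have ux: "u (a',i,mu) \<noteq> 0" using x unfolding supp_def by simp
    have muJ: "mu \<in> Jset l" using uW ux unfolding Wset_def l by auto
    have muD: "mu \<in> JD1set l1" using JD ux by blast
    have fin: "finite {lam::nat\<Rightarrow>nat. \<forall>p. lam p \<le> mu p}" by (rule finite_L[OF muJ])
    have "(\<Sum>lam\<in>{lam. \<forall>p. lam p \<le> mu p}.
      (if rho = (\<lambda>p. mu p - lam p) \<and> c = (\<lambda>p. a' p + a p) \<and> k = i
        then u (a',i,mu) * of_nat (binomv l mu lam) * (\<Prod>p<l. a p ^ lam p) else 0))
      = (\<Sum>lam\<in>{lam. \<forall>p. lam p \<le> mu p}.
         if lam = (\<lambda>_. 0) then (if rho = mu \<and> c = (\<lambda>p. a' p + a p) \<and> k = i then u (a',i,mu) else 0) else 0)"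
    proof (rule sum.cong[OF refl])
      fix lam assume lamL: "lam \<in> {lam::nat\<Rightarrow>nat. \<forall>p. lam p \<le> mu p}"
      show "(if rho = (\<lambda>p. mu p - lam p) \<and> c = (\<lambda>p. a' p + a p) \<and> k = i
        then u (a',i,mu) * of_nat (binomv l mu lam) * (\<Prod>p<l. a p ^ lam p) else 0) =
         (if lam = (\<lambda>_. 0) then (if rho = mu \<and> c = (\<lambda>p. a' p + a p) \<and> k = i then u (a',i,mu) else 0) else 0)"
      proof (cases "lam = (\<lambda>_. 0)")
        case True
        then show ?thesis by (simp add: binomv_zero)
      next
        case False
        then obtain p where p: "lam p \<noteq> 0" by auto
        have mup: "mu p \<noteq> 0" using p lamL by (metis le_zero_eq mem_Collect_eq)
        have pl1: "p < l1" using mup muD unfolding JD1set_def by (metis (mono_tags) mem_Collect_eq not_le)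
        have pl: "p < l" using mup muJ unfolding Jset_def by (metis (mono_tags) mem_Collect_eq not_le)
        have "(\<Prod>p<l. a p ^ lam p) = 0"
        proof (rule prod_zero)
          show "\<exists>x\<in>{..<l}. a x ^ lam x = 0" using p pl pl1 av by (intro bexI[of _ p]) (auto simp: zero_power)
        qed simp
        then show ?thesis using False by simp
      qed
    qed
    also have "\<dots> = (if rho = mu \<and> c = (\<lambda>p. a' p + a p) \<and> k = i then u (a',i,mu) else 0)"
      using fin by simp
    finally show ?thesis .
  qed
  have F1: "mulW l u (monoW a (\<lambda>_. 0) (\<lambda>_. 0)) (c,k,rho) =
     (\<Sum>x\<in>supp u. case x of (a',i,mu) \<Rightarrow> if rho = mu \<and> c = (\<lambda>p. a' p + a p) \<and> k = i then u x else 0)"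
    unfolding mulW_right
  proof (rule sum.cong[OF refl])
    fix x assume xs: "x \<in> supp u"
    obtain a' i mu where xe: "x = (a',i,mu)" by (cases x) auto
    show "(\<Sum>lam\<in>{lam. \<forall>p. lam p \<le> snd (snd x) p}.
        case x of (a',i,mu) \<Rightarrow> if rho = (\<lambda>p. mu p - lam p) \<and> c = (\<lambda>p. a' p + a p) \<and> k = i
        then u x * of_nat (binomv l mu lam) * (\<Prod>p<l. a p ^ lam p) else 0) =
      (case x of (a',i,mu) \<Rightarrow> if rho = mu \<and> c = (\<lambda>p. a' p + a p) \<and> k = i then u x else 0)"
      unfolding xe prod.case snd_conv by (rule inner) (use xs xe in simp)
  qed
  have F2: "mulW l (monoW a (\<lambda>_. 0) (\<lambda>_. 0)) u (c,k,rho) =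
     (\<Sum>x\<in>supp u. case x of (a',i,mu) \<Rightarrow> if rho = mu \<and> c = (\<lambda>p. a' p + a p) \<and> k = i then u x else 0)"
    unfolding mulW_left by (intro sum.cong refl) (auto simp: add.commute)
  show "bracketW l u (monoW a (\<lambda>_. 0) (\<lambda>_. 0)) w = 0"
    unfolding w bracketW_def F1 F2 by simp
qed



lemma centralizer_in_AD1:
  fixes u :: "'a::field_char_0 Welt" and G :: "(nat \<Rightarrow> 'a) set"
  assumes GV: "G \<subseteq> Vspace l1 l" and sg: "is_additive_subgroup G"
    and basis: "\<exists>B\<subseteq>G. is_basis_of B (Vspace l1 l)"
    and l: "l = l1 + l2 + l3"
    and uW: "u \<in> Wset l1 l2 l3 G"
    and cent: "\<forall>a\<in>G. bracketW l u (monoW a (\<lambda>_. 0) (\<lambda>_. 0)) = (\<lambda>_. 0)"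
  shows "u \<in> AD1set l1 l2 l3 G"
proof (rule ccontr)
  assume "u \<notin> AD1set l1 l2 l3 G"
  then obtain a1 i1 mu1 where u1: "u (a1,i1,mu1) \<noteq> 0" "mu1 \<notin> JD1set l1"
    using uW unfolding AD1set_def by auto
  have finS: "finite (supp u)" using uW unfolding Wset_def by simp
  have uJ: "\<And>a i mu. u (a,i,mu) \<noteq> 0 \<Longrightarrow> mu \<in> Jset l"
    using uW unfolding Wset_def l by auto
  define R where "R = {l1..<l}"
  have finR: "finite R" unfolding R_def by simp
  define M where "M = {x \<in> supp u. snd (snd x) \<notin> JD1set l1}"
  define s where "s = (\<lambda>mu::nat\<Rightarrow>nat. \<Sum>p\<in>R. mu p)"
  have finM: "finite M" using finS unfolding M_def by simp
  have M1: "(a1,i1,mu1) \<in> M" using u1 unfolding M_def supp_def by simp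
  define m where "m = Max ((\<lambda>x. s (snd (snd x))) ` M)"
  have "m \<in> (\<lambda>x. s (snd (snd x))) ` M" unfolding m_def
    using finM M1 by (intro Max_in) auto
  then obtain x0 where x0M: "x0 \<in> M" and x0m: "s (snd (snd x0)) = m" by auto
  have maxM: "\<And>x. x \<in> M \<Longrightarrow> s (snd (snd x)) \<le> m"
    unfolding m_def using finM by (intro Max_ge) auto
  obtain a0 k0 mu0 where x0e: "x0 = (a0,k0,mu0)" by (cases x0) auto
  have u0: "u (a0,k0,mu0) \<noteq> 0" and mu0D: "mu0 \<notin> JD1set l1"
    using x0M unfolding M_def supp_def x0e by auto
  have mu0J: "mu0 \<in> Jset l" using uJ[OF u0] .
  obtain q where q1: "q \<ge> l1" and q0: "mu0 q \<noteq> 0" using mu0D unfolding JD1set_def by auto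
  have ql: "q < l" using q0 mu0J unfolding Jset_def by (metis (mono_tags) mem_Collect_eq not_le)
  have qR: "q \<in> R" unfolding R_def using q1 ql by simp
  define rho where "rho = mu0(q := mu0 q - 1)"
  define h where "h = (\<lambda>(x::(nat \<Rightarrow> 'a) \<times> (nat \<Rightarrow> nat) \<times> (nat \<Rightarrow> nat)) (lam::nat\<Rightarrow>nat).
     case x of (a',i,mu) \<Rightarrow> if rho = (\<lambda>p. mu p - lam p) \<and> a' = a0 \<and> i = k0
       then u x * of_nat (binomv l mu lam) else 0)"
  define L where "L = (\<lambda>x::(nat \<Rightarrow> 'a) \<times> (nat \<Rightarrow> nat) \<times> (nat \<Rightarrow> nat). {lam::nat\<Rightarrow>nat. \<forall>p. lam p \<le> snd (snd x) p})"
  define F1 where "F1 = (\<lambda>a::nat\<Rightarrow>'a. \<Sum>x\<in>supp u. \<Sum>lam\<in>L x. h x lam * (\<Prod>p<l. a p ^ lam p))"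
  define K where "K = (\<Sum>y\<in>supp u. (case y of (b,j,nu) \<Rightarrow> if rho = nu \<and> b = a0 \<and> k0 = j then u y else 0))"
  have brk: "bracketW l u (monoW a (\<lambda>_. 0) (\<lambda>_. 0)) ((\<lambda>p. a0 p + a p), k0, rho) = F1 a - K" for a
  proof -
    have e1: "mulW l u (monoW a (\<lambda>_. 0) (\<lambda>_. 0)) ((\<lambda>p. a0 p + a p), k0, rho) = F1 a"
      unfolding mulW_right F1_def L_def h_def
      by (intro sum.cong refl) (auto simp: add_cancel_fun)
    have e2: "mulW l (monoW a (\<lambda>_. 0) (\<lambda>_. 0)) u ((\<lambda>p. a0 p + a p), k0, rho) = K"
      unfolding mulW_left K_def
      by (intro sum.cong refl) (auto simp: add_cancel_fun)
    show ?thesis unfolding bracketW_def e1 e2 ..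
  qed
  have FK: "F1 a = K" if "a \<in> G" for a
    using brk[of a] cent that by (metis eq_iff_diff_eq_0)
  have zG: "(\<lambda>_. 0) \<in> G" using sg unfolding is_additive_subgroup_def by simp
  define D where "D = (\<lambda>v::nat\<Rightarrow>'a. \<Sum>x\<in>supp u. \<Sum>lam\<in>L x. \<Sum>r\<in>R.
       h x lam * ((if lam = uvec r then 1 else 0) * v r))"
  have s_uvec: "s (uvec q) = 1"
  proof -
    have "s (uvec q) = (\<Sum>p\<in>R. if p = q then 1 else 0)" unfolding s_def uvec_def by simp
    also have "\<dots> = 1" using finR qR by simp
    finally show ?thesis .
  qed
  have mu0_eq: "mu0 = (\<lambda>p. rho p + uvec q p)"
    unfolding rho_def uvec_def using q0 by auto
  have s_mu0: "s mu0 = s rho + 1"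
    using s_uvec unfolding s_def by (subst mu0_eq) (simp add: sum.distrib)
  have m_eq: "m = s mu0" using x0m x0e by simp
  have Cdiff: "D v = F1 v - F1 (\<lambda>_. 0)" if vV: "v \<in> Vspace l1 l" for v
  proof -
    have v0: "\<forall>p<l1. v p = 0" using vV unfolding Vspace_def by auto
    have "F1 v - F1 (\<lambda>_. 0) = (\<Sum>x\<in>supp u. \<Sum>lam\<in>L x.
           h x lam * (\<Prod>p<l. v p ^ lam p) - h x lam * (\<Prod>p<l. (0::'a) ^ lam p))"
      unfolding F1_def by (simp add: sum_subtractf)
    also have "\<dots> = D v" unfolding D_def
    proof (rule sum.cong[OF refl], rule sum.cong[OF refl])
      fix x lam assume xs: "x \<in> supp u" and lamL: "lam \<in> L x"
      obtain a' i mu where xe: "x = (a',i,mu)" by (cases x) auto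
      show "h x lam * (\<Prod>p<l. v p ^ lam p) - h x lam * (\<Prod>p<l. (0::'a) ^ lam p) =
            (\<Sum>r\<in>R. h x lam * ((if lam = uvec r then 1 else 0) * v r))"
      proof (cases "h x lam = 0")
        case True then show ?thesis by simp
      next
        case False
        then have hx: "rho = (\<lambda>p. mu p - lam p)" "a' = a0" "i = k0"
          unfolding h_def xe by (auto split: if_splits)
        have ux: "u (a',i,mu) \<noteq> 0" using xs xe unfolding supp_def by simp
        have muJ: "mu \<in> Jset l" using uJ[OF ux] .
        have lm: "\<forall>p. lam p \<le> mu p" using lamL xe unfolding L_def by simp
        have lam_l: "\<forall>p\<ge>l. lam p = 0"
        proof (intro allI impI)
          fix p assume "l \<le> p"
          then have "mu p = 0" using muJ unfolding Jset_def by simp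
          then show "lam p = 0" using lm by (metis le_zero_eq)
        qed
        have cs: "lam = (\<lambda>_. 0) \<or> (\<exists>p<l1. lam p \<noteq> 0) \<or> (\<exists>r\<in>{l1..<l}. lam = uvec r)"
        proof (rule ccontr)
          assume nc: "\<not> ?thesis"
          have two: "2 \<le> s lam" unfolding s_def
          proof (rule two_le_sum[OF finR])
            show "lam \<noteq> (\<lambda>_. 0)" using nc by blast
            show "\<forall>p. p \<notin> R \<longrightarrow> lam p = 0" using nc lam_l unfolding R_def
              by (metis atLeastLessThan_iff not_le)
            show "\<forall>r\<in>R. lam \<noteq> uvec r" using nc unfolding R_def by blast
          qed
          have mu_eq: "mu = (\<lambda>p. rho p + lam p)" using hx(1) lm by auto
          have s_mu: "s mu = s rho + s lam" unfolding s_def by (subst mu_eq) (simp add: sum.distrib)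
          have "lam \<noteq> (\<lambda>_. 0)" using nc by blast
          then obtain p where p: "lam p \<noteq> 0" by (auto simp: fun_eq_iff)
          have pR: "p \<in> R" using p nc lam_l unfolding R_def by (metis atLeastLessThan_iff not_le)
          have "mu p \<noteq> 0" using p lm by (metis le_zero_eq)
          then have "mu \<notin> JD1set l1" using pR unfolding JD1set_def R_def by auto
          then have "x \<in> M" using xs xe unfolding M_def by simp
          then have "s mu \<le> s mu0" using maxM m_eq xe by fastforce
          then show False using s_mu s_mu0 two by simp
        qed
        have "(\<Prod>p<l. v p ^ lam p) - (\<Prod>p<l. (0::'a) ^ lam p) =
              (\<Sum>r\<in>{l1..<l}. (if lam = uvec r then 1 else 0) * v r)"
          by (rule key_P[OF v0 lam_l cs])
        then have "h x lam * ((\<Prod>p<l. v p ^ lam p) - (\<Prod>p<l. (0::'a) ^ lam p)) =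
              h x lam * (\<Sum>r\<in>R. (if lam = uvec r then 1 else 0) * v r)"
          unfolding R_def by simp
        then show ?thesis by (simp add: right_diff_distrib sum_distrib_left)
      qed
    qed
    finally show ?thesis by simp
  qed
  have Dlin: "D (\<lambda>p. \<Sum>b\<in>B. c b * b p) = (\<Sum>b\<in>B. c b * D b)" for B c
  proof -
    have "D (\<lambda>p. \<Sum>b\<in>B. c b * b p) = (\<Sum>x\<in>supp u. \<Sum>lam\<in>L x. \<Sum>r\<in>R. \<Sum>b\<in>B.
            c b * (h x lam * ((if lam = uvec r then 1 else 0) * b r)))"
      unfolding D_def by (intro sum.cong refl) (simp add: sum_distrib_left mult_ac)
    also have "\<dots> = (\<Sum>x\<in>supp u. \<Sum>lam\<in>L x. \<Sum>b\<in>B. \<Sum>r\<in>R.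
            c b * (h x lam * ((if lam = uvec r then 1 else 0) * b r)))"
      by (rule sum.cong[OF refl], rule sum.cong[OF refl], rule sum.swap)
    also have "\<dots> = (\<Sum>x\<in>supp u. \<Sum>b\<in>B. \<Sum>lam\<in>L x. \<Sum>r\<in>R.
            c b * (h x lam * ((if lam = uvec r then 1 else 0) * b r)))"
      by (rule sum.cong[OF refl], rule sum.swap)
    also have "\<dots> = (\<Sum>b\<in>B. \<Sum>x\<in>supp u. \<Sum>lam\<in>L x. \<Sum>r\<in>R.
            c b * (h x lam * ((if lam = uvec r then 1 else 0) * b r)))"
      by (rule sum.swap)
    also have "\<dots> = (\<Sum>b\<in>B. c b * D b)" unfolding D_def by (simp add: sum_distrib_left)
    finally show ?thesis .
  qed
  define eqv where "eqv = (\<lambda>p. if p = q then (1::'a) else 0)"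
  have DE: "D eqv = u (a0,k0,mu0) * of_nat (mu0 q)"
  proof -
    have "D eqv = (\<Sum>x\<in>supp u. \<Sum>lam\<in>L x. h x lam * (if lam = uvec q then 1 else 0))"
      unfolding D_def
    proof (rule sum.cong[OF refl], rule sum.cong[OF refl])
      fix x lam
      have "(\<Sum>r\<in>R. h x lam * ((if lam = uvec r then 1 else 0) * eqv r)) =
            (\<Sum>r\<in>R. if r = q then h x lam * (if lam = uvec q then 1 else 0) else 0)"
        unfolding eqv_def by (intro sum.cong refl) auto
      also have "\<dots> = h x lam * (if lam = uvec q then 1 else 0)" using finR qR by simp
      finally show "(\<Sum>r\<in>R. h x lam * ((if lam = uvec r then 1 else 0) * eqv r)) =
            h x lam * (if lam = uvec q then 1 else 0)" .
    qed
    also have "\<dots> = (\<Sum>x\<in>supp u. if x = x0 then h x0 (uvec q) else 0)"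
    proof (rule sum.cong[OF refl])
      fix x assume xs: "x \<in> supp u"
      obtain a' i mu where xe: "x = (a',i,mu)" by (cases x) auto
      have ux: "u (a',i,mu) \<noteq> 0" using xs xe unfolding supp_def by simp
      have finL: "finite (L x)" unfolding L_def xe using finite_L[OF uJ[OF ux]] by simp
      have "(\<Sum>lam\<in>L x. h x lam * (if lam = uvec q then 1 else 0)) =
            (\<Sum>lam\<in>L x. if lam = uvec q then h x (uvec q) else 0)"
        by (intro sum.cong refl) auto
      also have "\<dots> = (if uvec q \<in> L x then h x (uvec q) else 0)" using finL by simp
      also have "\<dots> = (if x = x0 then h x0 (uvec q) else 0)"
      proof (cases "x = x0")
        case True
        have "uvec q \<in> L x0" unfolding L_def x0e uvec_def using q0 by auto
        then show ?thesis using True by simp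
      next
        case False
        have "h x (uvec q) = 0" if inL: "uvec q \<in> L x"
        proof (rule ccontr)
          assume "h x (uvec q) \<noteq> 0"
          then have hx: "rho = (\<lambda>p. mu p - uvec q p)" "a' = a0" "i = k0"
            unfolding h_def xe by (auto split: if_splits)
          have mq: "1 \<le> mu q" using inL unfolding L_def xe uvec_def by (auto dest: spec[of _ q])
          have "mu = mu0"
          proof
            fix p show "mu p = mu0 p"
            proof (cases "p = q")
              case True
              have "rho q = mu q - 1" using hx(1) unfolding uvec_def by (metis (mono_tags))
              moreover have "rho q = mu0 q - 1" unfolding rho_def by simp
              ultimately show ?thesis using True mq q0 by simp
            next
              case False
              have "rho p = mu p" using hx(1) False unfolding uvec_def by (metis (mono_tags) diff_zero)
              moreover have "rho p = mu0 p" unfolding rho_def using False by simp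
              ultimately show ?thesis by simp
            qed
          qed
          then show False using False xe x0e hx by simp
        qed
        then show ?thesis using False by auto
      qed
      finally show "(\<Sum>lam\<in>L x. h x lam * (if lam = uvec q then 1 else 0)) =
            (if x = x0 then h x0 (uvec q) else 0)" .
    qed
    also have "\<dots> = h x0 (uvec q)"
    proof -
      have "x0 \<in> supp u" using x0M unfolding M_def by simp
      then show ?thesis using finS by simp
    qed
    also have "\<dots> = u (a0,k0,mu0) * of_nat (mu0 q)"
    proof -
      have "rho = (\<lambda>p. mu0 p - uvec q p)" unfolding rho_def uvec_def by auto
      then show ?thesis unfolding h_def x0e using binomv_uvec[OF ql, of mu0] by simp
    qed
    finally show ?thesis .
  qed
  have DEne: "D eqv \<noteq> 0" using DE u0 q0 by simp
  obtain B where BG: "B \<subseteq> G" and Bb: "is_basis_of B (Vspace l1 l)" using basis by blast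
  have eV: "eqv \<in> Vspace l1 l" unfolding Vspace_def eqv_def using q1 ql by auto
  obtain c where ce: "eqv = (\<lambda>p. \<Sum>b\<in>B. c b * b p)" using Bb eV unfolding is_basis_of_def by blast
  have "D eqv = (\<Sum>b\<in>B. c b * D b)" unfolding ce by (rule Dlin)
  also have "\<dots> = 0"
  proof (rule sum.neutral, rule ballI)
    fix b assume bB: "b \<in> B"
    have bG: "b \<in> G" using bB BG by auto
    have "D b = F1 b - F1 (\<lambda>_. 0)" using Cdiff GV bG by auto
    also have "\<dots> = 0" using FK[OF bG] FK[OF zG] by simp
    finally show "c b * D b = 0" by simp
  qed
  finally show False using DEne by simp
qed


theorem mainTheorem4:
  fixes l1 l2 l3 :: nat and G :: "(nat \<Rightarrow> 'a::field_char_0) set"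
  assumes "l1 + l2 + l3 > 0"
    and "G \<subseteq> Vspace l1 (l1 + l2 + l3)"
    and "is_additive_subgroup G"
    and "\<exists>B\<subseteq>G. is_basis_of B (Vspace l1 (l1 + l2 + l3))"
  shows "{u \<in> Wset l1 l2 l3 G. \<forall>a\<in>G.
            bracketW (l1 + l2 + l3) u (monoW a (\<lambda>_. 0) (\<lambda>_. 0)) = (\<lambda>_. 0)}
         = AD1set l1 l2 l3 G"
proof
  show "{u \<in> Wset l1 l2 l3 G. \<forall>a\<in>G.
            bracketW (l1 + l2 + l3) u (monoW a (\<lambda>_. 0) (\<lambda>_. 0)) = (\<lambda>_. 0)}
         \<subseteq> AD1set l1 l2 l3 G"
    using centralizer_in_AD1[OF assms(2) assms(3) assms(4) refl] by blast
  show "AD1set l1 l2 l3 G \<subseteq> {u \<in> Wset l1 l2 l3 G. \<forall>a\<in>G.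
            bracketW (l1 + l2 + l3) u (monoW a (\<lambda>_. 0) (\<lambda>_. 0)) = (\<lambda>_. 0)}"
  proof
    fix u assume uA: "u \<in> AD1set l1 l2 l3 G"
    have "u \<in> Wset l1 l2 l3 G" using uA unfolding AD1set_def by simp
    moreover have "\<forall>a\<in>G. bracketW (l1 + l2 + l3) u (monoW a (\<lambda>_. 0) (\<lambda>_. 0)) = (\<lambda>_. 0)"
      using AD1_centralizes[OF assms(2) uA _ refl] by blast
    ultimately show "u \<in> {u \<in> Wset l1 l2 l3 G. \<forall>a\<in>G.
            bracketW (l1 + l2 + l3) u (monoW a (\<lambda>_. 0) (\<lambda>_. 0)) = (\<lambda>_. 0)}" by blast
  qed
qed

end
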